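(* Let $\alpha=(\alpha_1,\dots,\alpha_k)$ be a composition of $n$ with $k$ parts. Fix positive integers $i_1<\dots<i_k$ and consider all words that are rearrangements of the multiset containing $i_j$ with multiplicity $\alpha_j$ for each $j$ (words with this fixed content, of packed content $\alpha$). Then the number of $\#$-Sylvester equivalence classes of these words is \[\det\left[\binom{j+\sum_{\ell=1}^i\alpha_\ell}{j-(i-1)}\right]_{1\le i,j\le k-1}\] (the empty determinant, for $k=1$, being $1$).
   Context: Words are finite sequences of positive integers; the packed content of a word is the composition listing the multiplicities of its distinct letters in increasing order of the letters. Two words $w_1,w_2$ are $\#$-Sylvester adjacent if there are words $u,v,w$ and letters $a<b\le c$ with $w_1=u\,b\,v\,a\,c\,w$ and $w_2=u\,b\,v\,c\,a\,w$. $\#$-Sylvester equivalence is the equivalence relation generated by $\#$-Sylvester adjacency. Binomial coefficients $\binom{N}{r}$ with $r<0$ are $0$. *)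

theory Defs
  imports "Jordan_Normal_Form.Determinant" "HOL-Library.Multiset"
begin

definition sylv_adj :: "nat list \<Rightarrow> nat list \<Rightarrow> bool" where
  "sylv_adj w1 w2 \<longleftrightarrow> (\<exists>u v w a b c. a < b \<and> b \<le> c \<and>
      w1 = u @ [b] @ v @ [a, c] @ w \<and> w2 = u @ [b] @ v @ [c, a] @ w)"

definition sylv_equiv :: "nat list \<Rightarrow> nat list \<Rightarrow> bool" where
  "sylv_equiv = (\<lambda>x y. sylv_adj x y \<or> sylv_adj y x)\<^sup>*\<^sup>*"

definition binom_int :: "nat \<Rightarrow> int \<Rightarrow> int" where
  "binom_int N r = (if r < 0 then 0 else int (N choose nat r))"

definition words_with_content :: "nat list \<Rightarrow> nat list \<Rightarrow> nat list set" where
  "words_with_content al ls =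
     {w. mset w = (\<Sum>j<length al. replicate_mset (al ! j) (ls ! j))}"

end

theory Submission
  imports Defs "HOL-Computational_Algebra.Polynomial"
begin

datatype tr = Lf | Nd tr nat tr

function phi :: "nat list \<Rightarrow> tr" where
  "phi [] = Lf"
| "phi (x # w) = Nd (phi (filter (\<lambda>y. y < x) w)) x (phi (filter (\<lambda>y. x \<le> y) w))"
  by pat_completeness auto
termination by (relation "measure length") (auto simp: le_imp_less_Suc length_filter_le)

lemma phi_swap:
  assumes "b \<in> set p" "a < b" "b \<le> c"
  shows "phi (p @ a # c # q) = phi (p @ c # a # q)"
  using assms
proof (induction "length p" arbitrary: p q rule: less_induct)
  case less
  then obtain x p' where p: "p = x # p'" by (cases p) auto
  show ?case
  proof (cases "c < x")
    case True
    then have "b \<noteq> x" using less by auto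
    then have b: "b \<in> set (filter (\<lambda>y. y < x) p')" using less p True by auto
    have "length (filter (\<lambda>y. y < x) p') < length p" using p by (simp add: le_imp_less_Suc length_filter_le)
    from less(1)[OF this b less(3,4), of "filter (\<lambda>y. y < x) q"]
    show ?thesis using True less p by auto
  next
    case False
    show ?thesis
    proof (cases "x \<le> a")
      case True
      then have "b \<noteq> x" using less by auto
      then have b: "b \<in> set (filter (\<lambda>y. x \<le> y) p')" using less p True by auto
      have "length (filter (\<lambda>y. x \<le> y) p') < length p" using p by (simp add: le_imp_less_Suc length_filter_le)
      from less(1)[OF this b less(3,4), of "filter (\<lambda>y. x \<le> y) q"]
      show ?thesis using True less p by auto
    next
      case False2: False
      then show ?thesis using False p by auto
    qed
  qed
qed

lemma phi_adj: "sylv_adj w1 w2 \<Longrightarrow> phi w1 = phi w2"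
  unfolding sylv_adj_def
proof (elim exE conjE)
  fix u v w a b c
  assume h: "a < b" "b \<le> c" "w1 = u @ [b] @ v @ [a, c] @ w" "w2 = u @ [b] @ v @ [c, a] @ w"
  have "phi ((u @ [b] @ v) @ a # c # w) = phi ((u @ [b] @ v) @ c # a # w)"
    by (rule phi_swap) (use h in auto)
  then show "phi w1 = phi w2" using h by simp
qed

lemma phi_equiv: "sylv_equiv w1 w2 \<Longrightarrow> phi w1 = phi w2"
  unfolding sylv_equiv_def
  by (induction rule: rtranclp_induct) (auto dest: phi_adj)

lemma equiv_sym: "sylv_equiv a b \<Longrightarrow> sylv_equiv b a"
  unfolding sylv_equiv_def
proof (induction rule: rtranclp_induct)
  case base then show ?case by simp
next
  case (step y z)
  then have "(\<lambda>x y. sylv_adj x y \<or> sylv_adj y x) z y" by auto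
  then show ?case using step(3) by (rule converse_rtranclp_into_rtranclp)
qed

lemma equiv_trans: "sylv_equiv a b \<Longrightarrow> sylv_equiv b c \<Longrightarrow> sylv_equiv a c"
  unfolding sylv_equiv_def by (rule rtranclp_trans)

lemma adj_ctx: "sylv_adj s1 s2 \<Longrightarrow> sylv_adj (p @ s1 @ t) (p @ s2 @ t)"
  unfolding sylv_adj_def
proof (elim exE conjE)
  fix u v w a b c
  assume h: "a < b" "b \<le> c" "s1 = u @ [b] @ v @ [a, c] @ w" "s2 = u @ [b] @ v @ [c, a] @ w"
  show "\<exists>u v w a b c. a < b \<and> b \<le> c \<and> p @ s1 @ t = u @ [b] @ v @ [a, c] @ w \<and>
      p @ s2 @ t = u @ [b] @ v @ [c, a] @ w"
    by (rule exI[of _ "p @ u"], rule exI[of _ v], rule exI[of _ "w @ t"]) (use h in auto)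
qed

lemma equiv_ctx: "sylv_equiv s1 s2 \<Longrightarrow> sylv_equiv (p @ s1 @ t) (p @ s2 @ t)"
  unfolding sylv_equiv_def
proof (induction rule: rtranclp_induct)
  case base then show ?case by simp
next
  case (step y z)
  then have "(\<lambda>x y. sylv_adj x y \<or> sylv_adj y x) (p @ y @ t) (p @ z @ t)"
    using adj_ctx by blast
  with step(3) show ?case by (rule rtranclp.rtrancl_into_rtrancl)
qed

lemma swap_equiv:
  assumes "x \<in> set p" "a < x" "x \<le> c"
  shows "sylv_equiv (p @ c # a # s) (p @ a # c # s)"
proof -
  obtain u v where p: "p = u @ x # v" using assms(1) by (meson split_list)
  have "sylv_adj (p @ a # c # s) (p @ c # a # s)"
    unfolding sylv_adj_def using assms p
    by (intro exI[of _ u] exI[of _ v] exI[of _ s] exI[of _ a] exI[of _ x] exI[of _ c]) auto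
  then show ?thesis unfolding sylv_equiv_def by auto
qed

lemma move_equiv:
  assumes "x \<in> set p" "\<forall>a\<in>set L. a < x" "x \<le> y"
  shows "sylv_equiv (p @ y # L @ s) (p @ L @ y # s)"
  using assms
proof (induction L arbitrary: p)
  case Nil then show ?case unfolding sylv_equiv_def by simp
next
  case (Cons a L)
  have 1: "sylv_equiv (p @ y # a # L @ s) (p @ a # y # L @ s)"
    using swap_equiv[of x p a y "L @ s"] Cons by auto
  have 2: "sylv_equiv (p @ a # y # L @ s) (p @ a # L @ y # s)"
    using Cons.IH[of "p @ [a]"] Cons.prems by simp
  show ?case using equiv_trans[OF 1] 2 by simp
qed

lemma sort_equiv:
  assumes "x \<in> set p"
  shows "sylv_equiv (p @ r) (p @ filter (\<lambda>y. y < x) r @ filter (\<lambda>y. x \<le> y) r)"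
  using assms
proof (induction r arbitrary: p)
  case Nil then show ?case unfolding sylv_equiv_def by simp
next
  case (Cons y r)
  have IH: "sylv_equiv ((p @ [y]) @ r) ((p @ [y]) @ filter (\<lambda>y. y < x) r @ filter (\<lambda>y. x \<le> y) r)"
    using Cons.IH[of "p @ [y]"] Cons.prems by simp
  show ?case
  proof (cases "y < x")
    case True
    then show ?thesis using IH by simp
  next
    case False
    have 2: "sylv_equiv (p @ y # filter (\<lambda>y. y < x) r @ filter (\<lambda>y. x \<le> y) r)
                        (p @ filter (\<lambda>y. y < x) r @ y # filter (\<lambda>y. x \<le> y) r)"
      by (rule move_equiv) (use Cons False in auto)
    show ?thesis using equiv_trans[OF _ 2] IH False by simp
  qed
qed

lemma phi_complete: "phi w1 = phi w2 \<Longrightarrow> sylv_equiv w1 w2"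
proof (induction w1 arbitrary: w2 rule: phi.induct)
  case 1
  then show ?case by (cases w2) (auto simp: sylv_equiv_def)
next
  case (2 x w)
  then obtain r2 where w2: "w2 = x # r2" by (cases w2) auto
  have e1: "sylv_equiv (filter (\<lambda>y. y < x) w) (filter (\<lambda>y. y < x) r2)"
    using 2 w2 by auto
  have e2: "sylv_equiv (filter (\<lambda>y. x \<le> y) w) (filter (\<lambda>y. x \<le> y) r2)"
    using 2 w2 by auto
  have a: "sylv_equiv ([x] @ w) ([x] @ filter (\<lambda>y. y < x) w @ filter (\<lambda>y. x \<le> y) w)"
    by (rule sort_equiv) auto
  have b: "sylv_equiv ([x] @ filter (\<lambda>y. y < x) w @ filter (\<lambda>y. x \<le> y) w)
                      ([x] @ filter (\<lambda>y. y < x) r2 @ filter (\<lambda>y. x \<le> y) w)"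
    using equiv_ctx[OF e1, of "[x]" "filter (\<lambda>y. x \<le> y) w"] by simp
  have c: "sylv_equiv (([x] @ filter (\<lambda>y. y < x) r2) @ filter (\<lambda>y. x \<le> y) w @ [])
                      (([x] @ filter (\<lambda>y. y < x) r2) @ filter (\<lambda>y. x \<le> y) r2 @ [])"
    by (rule equiv_ctx[OF e2])
  have d: "sylv_equiv ([x] @ r2) ([x] @ filter (\<lambda>y. y < x) r2 @ filter (\<lambda>y. x \<le> y) r2)"
    by (rule sort_equiv) auto
  show ?case using equiv_trans[OF a equiv_trans[OF b equiv_trans[OF _ equiv_sym[OF d]]]] c w2
    by simp
qed

lemma card_eq_by_kernel:
  assumes "\<forall>x\<in>A. \<forall>y\<in>A. f x = f y \<longleftrightarrow> g x = g y"
  shows "card (f ` A) = card (g ` A)"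
proof -
  define h where "h = (\<lambda>z. g (inv_into A f z))"
  have hx: "h (f x) = g x" if "x \<in> A" for x
  proof -
    have "inv_into A f (f x) \<in> A" "f (inv_into A f (f x)) = f x"
      using that by (auto intro: inv_into_into f_inv_into_f)
    then show ?thesis unfolding h_def using assms that by blast
  qed
  have inj: "inj_on h (f ` A)"
  proof (rule inj_onI)
    fix u v assume "u \<in> f ` A" "v \<in> f ` A" "h u = h v"
    then obtain x y where "x \<in> A" "y \<in> A" "u = f x" "v = f y" by auto
    then show "u = v" using \<open>h u = h v\<close> hx assms by auto
  qed
  have "h ` f ` A = g ` A" using hx by (auto simp: image_iff)
  then show ?thesis using card_image[OF inj] by simp
qed

lemma classes_card:
  "card ((\<lambda>w. {w'. sylv_equiv w w'}) ` A) = card (phi ` A)"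
proof (rule card_eq_by_kernel, intro ballI)
  fix x y
  show "({w'. sylv_equiv x w'} = {w'. sylv_equiv y w'}) = (phi x = phi y)"
  proof
    assume h: "{w'. sylv_equiv x w'} = {w'. sylv_equiv y w'}"
    have "sylv_equiv y y" unfolding sylv_equiv_def by simp
    then have "sylv_equiv x y" using h by blast
    then show "phi x = phi y" by (rule phi_equiv)
  next
    assume "phi x = phi y"
    then have e: "sylv_equiv x y" by (rule phi_complete)
    show "{w'. sylv_equiv x w'} = {w'. sylv_equiv y w'}"
      using equiv_trans[OF e] equiv_trans[OF equiv_sym[OF e]] by blast
  qed
qed

definition SM :: "nat multiset \<Rightarrow> tr set" where
  "SM M = phi ` {w. mset w = M}"

fun tsize :: "tr \<Rightarrow> nat" where
  "tsize Lf = 0" | "tsize (Nd l x r) = tsize l + 1 + tsize r"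

fun ns :: "tr \<Rightarrow> nat" where
  "ns Lf = 0" | "ns (Nd l x r) = tsize l + ns r"

definition LT :: "nat \<Rightarrow> nat multiset \<Rightarrow> nat multiset" where
  "LT x M = filter_mset (\<lambda>y. y < x) M"
definition GE :: "nat \<Rightarrow> nat multiset \<Rightarrow> nat multiset" where
  "GE x M = filter_mset (\<lambda>y. x \<le> y) M - {#x#}"

definition Cn :: "nat multiset \<Rightarrow> nat" where "Cn M = card (SM M)"
definition RR :: "nat multiset \<Rightarrow> int poly" where
  "RR M = (\<Sum>T\<in>SM M. [:1,-1:] ^ ns T)"

lemma finite_SM: "finite (SM M)"
proof -
  have "{w. mset w = M} \<subseteq> {w. set w \<subseteq> set_mset M \<and> length w = size M}" by auto
  moreover have "finite {w. set w \<subseteq> set_mset M \<and> length w = size M}"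
    by (rule finite_lists_length_eq) simp
  ultimately have "finite {w. mset w = M}" by (rule finite_subset)
  then show ?thesis unfolding SM_def by (rule finite_imageI)
qed

lemma SM_empty: "SM {#} = {Lf}"
  unfolding SM_def by auto

lemma tsize_phi: "tsize (phi w) = length w"
proof (induction w rule: phi.induct)
  case 1 then show ?case by simp
next
  case (2 x w)
  have "length (filter (\<lambda>y. y < x) w) + length (filter (\<lambda>y. \<not> y < x) w) = length w"
    by (rule sum_length_filter_compl)
  moreover have "filter (\<lambda>y. \<not> y < x) w = filter (\<lambda>y. x \<le> y) w"
    by (rule filter_cong) auto
  ultimately show ?case using 2 by simp
qed

lemma tsize_SM: "T \<in> SM M \<Longrightarrow> tsize T = size M"
proof -
  assume "T \<in> SM M"
  then obtain w where "mset w = M" "T = phi w" unfolding SM_def by auto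
  then show ?thesis using tsize_phi[of w] size_mset[of w] by simp
qed

lemma mset_part: "LT x M + filter_mset (\<lambda>y. x \<le> y) M = M"
proof -
  have "filter_mset (\<lambda>y. x \<le> y) M = filter_mset (\<lambda>y. \<not> y < x) M"
    by (rule filter_mset_cong) auto
  then show ?thesis unfolding LT_def by (simp add: multiset_partition[symmetric])
qed

lemma SM_dec:
  assumes "M \<noteq> {#}"
  shows "SM M = (\<Union>x\<in>set_mset M. (\<lambda>(l,r). Nd l x r) ` (SM (LT x M) \<times> SM (GE x M)))"
proof
  show "SM M \<subseteq> (\<Union>x\<in>set_mset M. (\<lambda>(l,r). Nd l x r) ` (SM (LT x M) \<times> SM (GE x M)))"
  proof
    fix T assume "T \<in> SM M"
    then obtain w where w: "mset w = M" "T = phi w" unfolding SM_def by auto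
    then obtain x w' where xw: "w = x # w'" using assms by (cases w) auto
    have M: "M = add_mset x (mset w')" using w xw by simp
    have 1: "mset (filter (\<lambda>y. y < x) w') = LT x M" unfolding LT_def M by simp
    have 2: "mset (filter (\<lambda>y. x \<le> y) w') = GE x M" unfolding GE_def M by simp
    have "x \<in> set_mset M" using M by simp
    moreover have "T = (\<lambda>(l,r). Nd l x r) (phi (filter (\<lambda>y. y < x) w'), phi (filter (\<lambda>y. x \<le> y) w'))"
      using w xw by simp
    moreover have "(phi (filter (\<lambda>y. y < x) w'), phi (filter (\<lambda>y. x \<le> y) w')) \<in> SM (LT x M) \<times> SM (GE x M)"
      using 1 2 unfolding SM_def by auto
    ultimately show "T \<in> (\<Union>x\<in>set_mset M. (\<lambda>(l,r). Nd l x r) ` (SM (LT x M) \<times> SM (GE x M)))"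
      by blast
  qed
next
  show "(\<Union>x\<in>set_mset M. (\<lambda>(l,r). Nd l x r) ` (SM (LT x M) \<times> SM (GE x M))) \<subseteq> SM M"
  proof (clarsimp)
    fix x l r assume x: "x \<in># M" and l: "l \<in> SM (LT x M)" and r: "r \<in> SM (GE x M)"
    obtain wl where wl: "mset wl = LT x M" "l = phi wl" using l unfolding SM_def by auto
    obtain wr where wr: "mset wr = GE x M" "r = phi wr" using r unfolding SM_def by auto
    have a1: "\<forall>y\<in>set wl. y < x" using wl unfolding LT_def by (auto simp flip: set_mset_mset)
    have a2: "\<forall>y\<in>set wr. x \<le> y"
    proof
      fix y assume "y \<in> set wr"
      then have "y \<in># GE x M" using wr by (simp flip: set_mset_mset)
      then have "y \<in># filter_mset (\<lambda>y. x \<le> y) M" unfolding GE_def by (rule in_diffD)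
      then show "x \<le> y" by simp
    qed
    have f1: "filter (\<lambda>y. y < x) (wl @ wr) = wl" using a1 a2 by (auto simp: not_less)
    have f2: "filter (\<lambda>y. x \<le> y) (wl @ wr) = wr" using a1 a2 by (auto simp: not_le)
    have xg: "x \<in># filter_mset (\<lambda>y. x \<le> y) M" using x by simp
    have "mset (x # wl @ wr) = add_mset x (LT x M + GE x M)" using wl wr by simp
    also have "\<dots> = LT x M + add_mset x (GE x M)" by simp
    also have "add_mset x (GE x M) = filter_mset (\<lambda>y. x \<le> y) M"
      unfolding GE_def using xg by (simp add: insert_DiffM)
    finally have "mset (x # wl @ wr) = M" using mset_part by simp
    moreover have "Nd l x r = phi (x # wl @ wr)" using f1 f2 wl wr by simp
    ultimately show "Nd l x r \<in> SM M" unfolding SM_def by blast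
  qed
qed

lemma disj_images:
  "\<forall>x\<in>A. \<forall>y\<in>A. x \<noteq> y \<longrightarrow>
     ((\<lambda>(l,r). Nd l x r) ` (F x)) \<inter> ((\<lambda>(l,r). Nd l y r) ` (G y)) = {}"
  by auto

lemma inj_Nd: "inj_on (\<lambda>(l,r). Nd l x r) S"
  by (auto simp: inj_on_def)

lemma Cn_rec:
  assumes "M \<noteq> {#}"
  shows "Cn M = (\<Sum>x\<in>set_mset M. Cn (LT x M) * Cn (GE x M))"
proof -
  have "Cn M = card (\<Union>x\<in>set_mset M. (\<lambda>(l,r). Nd l x r) ` (SM (LT x M) \<times> SM (GE x M)))"
    unfolding Cn_def using SM_dec[OF assms] by simp
  also have "\<dots> = (\<Sum>x\<in>set_mset M. card ((\<lambda>(l,r). Nd l x r) ` (SM (LT x M) \<times> SM (GE x M))))"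
    by (rule card_UN_disjoint) (auto simp: finite_SM)
  also have "\<dots> = (\<Sum>x\<in>set_mset M. Cn (LT x M) * Cn (GE x M))"
    by (rule sum.cong) (auto simp: card_image[OF inj_Nd] card_cartesian_product Cn_def)
  finally show ?thesis .
qed

lemma RR_rec:
  assumes "M \<noteq> {#}"
  shows "RR M = (\<Sum>x\<in>set_mset M. of_nat (Cn (LT x M)) * [:1,-1:] ^ size (LT x M) * RR (GE x M))"
proof -
  let ?q = "[:1,-1:] :: int poly"
  have "RR M = (\<Sum>T\<in>(\<Union>x\<in>set_mset M. (\<lambda>(l,r). Nd l x r) ` (SM (LT x M) \<times> SM (GE x M))). ?q ^ ns T)"
    unfolding RR_def using SM_dec[OF assms] by simp
  also have "\<dots> = (\<Sum>x\<in>set_mset M. \<Sum>T\<in>(\<lambda>(l,r). Nd l x r) ` (SM (LT x M) \<times> SM (GE x M)). ?q ^ ns T)"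
    by (rule sum.UNION_disjoint) (auto simp: finite_SM)
  also have "\<dots> = (\<Sum>x\<in>set_mset M. of_nat (Cn (LT x M)) * ?q ^ size (LT x M) * RR (GE x M))"
  proof (rule sum.cong)
    fix x assume "x \<in> set_mset M"
    have "(\<Sum>T\<in>(\<lambda>(l,r). Nd l x r) ` (SM (LT x M) \<times> SM (GE x M)). ?q ^ ns T)
        = (\<Sum>(l,r)\<in>SM (LT x M) \<times> SM (GE x M). ?q ^ ns (Nd l x r))"
      by (subst sum.reindex[OF inj_Nd]) (simp add: comp_def case_prod_unfold)
    also have "\<dots> = (\<Sum>l\<in>SM (LT x M). \<Sum>r\<in>SM (GE x M). ?q ^ ns (Nd l x r))"
      by (rule sum.cartesian_product[symmetric])
    also have "\<dots> = (\<Sum>l\<in>SM (LT x M). ?q ^ size (LT x M) * RR (GE x M))"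
      by (rule sum.cong) (auto simp: tsize_SM power_add RR_def sum_distrib_left)
    also have "\<dots> = of_nat (Cn (LT x M)) * ?q ^ size (LT x M) * RR (GE x M)"
      by (simp add: Cn_def)
    finally show "(\<Sum>T\<in>(\<lambda>(l,r). Nd l x r) ` (SM (LT x M) \<times> SM (GE x M)). ?q ^ ns T)
        = of_nat (Cn (LT x M)) * ?q ^ size (LT x M) * RR (GE x M)" .
  qed simp
  finally show ?thesis .
qed

lemma q_eq: "([:1,-1:] :: int poly) = 1 - [:0,1:]"
  by (simp add: poly_eq_iff coeff_pCons split: nat.split)

lemma Cn_empty: "Cn {#} = 1" and RR_empty: "RR {#} = 1"
  by (auto simp: Cn_def RR_def SM_empty)

lemma Cn_RR: "int (Cn M) = poly (RR M) 0"
  by (simp add: Cn_def RR_def poly_sum poly_power)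

lemma RR_single: "RR {#m#} = 1"
  using RR_rec[of "{#m#}"] by (simp add: LT_def GE_def Cn_empty RR_empty)

lemma size_LT_GE: "x \<in># M \<Longrightarrow> size (LT x M) + size (GE x M) + 1 = size M"
proof -
  assume x: "x \<in># M"
  then have "x \<in># filter_mset (\<lambda>y. x \<le> y) M" by simp
  then have "size (GE x M) + 1 = size (filter_mset (\<lambda>y. x \<le> y) M)"
    unfolding GE_def by (metis insert_DiffM size_add_mset Suc_eq_plus1)
  moreover have "size (LT x M) + size (filter_mset (\<lambda>y. x \<le> y) M) = size M"
    using mset_part[of x M] by (metis size_union)
  ultimately show ?thesis by simp
qed

lemma lemmaB:
  assumes "\<forall>y\<in>#M. y < m"
  shows "[:0,1:] * RR (add_mset m M) = RR M - of_nat (Cn M) * [:1,-1:] ^ (size M + 1)"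
  using assms
proof (induction "size M" arbitrary: M rule: less_induct)
  case less
  let ?q = "[:1,-1:] :: int poly"
  let ?X = "[:0,1:] :: int poly"
  let ?M' = "add_mset m M"
  show ?case
  proof (cases "M = {#}")
    case True
    then show ?thesis by (simp add: RR_single Cn_empty RR_empty q_eq)
  next
    case False
    have mM: "m \<notin># M" using less.prems by auto
    have LTm: "LT m ?M' = M"
    proof -
      have "filter_mset (\<lambda>y. y < m) M = filter_mset (\<lambda>y. True) M"
        by (rule filter_mset_cong) (use less.prems in auto)
      then show ?thesis unfolding LT_def by simp
    qed
    have GEm: "GE m ?M' = {#}"
    proof -
      have "filter_mset (\<lambda>y. m \<le> y) M = filter_mset (\<lambda>y. False) M"
        by (rule filter_mset_cong) (use less.prems in auto)
      then show ?thesis unfolding GE_def by simp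
    qed
    have LTx: "LT x ?M' = LT x M" if "x \<in># M" for x
      unfolding LT_def using that less.prems by auto
    have GEx: "GE x ?M' = add_mset m (GE x M)" if "x \<in># M" for x
      unfolding GE_def using that less.prems by auto
    have IH: "?X * RR (add_mset m (GE x M)) = RR (GE x M) - of_nat (Cn (GE x M)) * ?q ^ (size (GE x M) + 1)"
      if "x \<in># M" for x
    proof (rule less.hyps)
      show "size (GE x M) < size M" using size_LT_GE[OF that] by simp
      show "\<forall>y\<in>#GE x M. y < m" using less.prems unfolding GE_def by (auto dest: in_diffD)
    qed
    have "RR ?M' = of_nat (Cn M) * ?q ^ size M * RR {#}
        + (\<Sum>x\<in>set_mset M. of_nat (Cn (LT x M)) * ?q ^ size (LT x M) * RR (add_mset m (GE x M)))"
      using RR_rec[of ?M'] mM LTm GEm LTx GEx by (simp cong: sum.cong)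
    then have "?X * RR ?M' = ?X * of_nat (Cn M) * ?q ^ size M
        + (\<Sum>x\<in>set_mset M. of_nat (Cn (LT x M)) * ?q ^ size (LT x M) * (?X * RR (add_mset m (GE x M))))"
      by (simp add: RR_empty algebra_simps sum_distrib_left)
    also have "(\<Sum>x\<in>set_mset M. of_nat (Cn (LT x M)) * ?q ^ size (LT x M) * (?X * RR (add_mset m (GE x M))))
      = (\<Sum>x\<in>set_mset M. of_nat (Cn (LT x M)) * ?q ^ size (LT x M) * RR (GE x M))
        - (\<Sum>x\<in>set_mset M. of_nat (Cn (LT x M) * Cn (GE x M)) * ?q ^ size M)"
    proof -
      have "of_nat (Cn (LT x M)) * ?q ^ size (LT x M) * (?X * RR (add_mset m (GE x M)))
          = of_nat (Cn (LT x M)) * ?q ^ size (LT x M) * RR (GE x M)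
            - of_nat (Cn (LT x M) * Cn (GE x M)) * ?q ^ size M" if "x \<in># M" for x
      proof -
        have eqn: "?q ^ size M = ?q ^ size (LT x M) * ?q ^ (size (GE x M) + 1)"
          using size_LT_GE[OF that] by (metis add.assoc power_add)
        from IH[OF that] have "of_nat (Cn (LT x M)) * ?q ^ size (LT x M) * (?X * RR (add_mset m (GE x M)))
          = of_nat (Cn (LT x M)) * ?q ^ size (LT x M) * (RR (GE x M) - of_nat (Cn (GE x M)) * ?q ^ (size (GE x M) + 1))"
          by (rule arg_cong)
        then show ?thesis unfolding eqn of_nat_mult
          by (simp only: right_diff_distrib mult.assoc mult.commute mult.left_commute)
      qed
      then show ?thesis by (simp add: sum_subtractf[symmetric] cong: sum.cong)
    qed
    also have "(\<Sum>x\<in>set_mset M. of_nat (Cn (LT x M) * Cn (GE x M)) * ?q ^ size M)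
        = of_nat (Cn M) * ?q ^ size M"
      using Cn_rec[OF False] by (simp add: sum_distrib_right)
    finally have "?X * RR ?M' = ?X * of_nat (Cn M) * ?q ^ size M + RR M - of_nat (Cn M) * ?q ^ size M"
      using RR_rec[OF False] by simp
    also have "\<dots> = RR M - of_nat (Cn M) * ?q ^ (size M + 1)"
    proof -
      have "?q = 1 - ?X" by (rule q_eq)
      then show ?thesis by (simp add: algebra_simps)
    qed
    finally show ?thesis .
  qed
qed

lemma lemmaA:
  assumes "m \<in># M" "\<forall>y\<in>#M. y \<le> m"
  shows "RR (add_mset m M) = RR M"
  using assms
proof (induction "size M" arbitrary: M rule: less_induct)
  case less
  let ?M' = "add_mset m M"
  have ne: "M \<noteq> {#}" using less.prems by auto
  have set_eq: "set_mset ?M' = set_mset M" using less.prems by auto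
  have LTx: "LT x ?M' = LT x M" if "x \<in># M" for x
    unfolding LT_def using that less.prems by auto
  have GEx: "RR (GE x ?M') = RR (GE x M)" if x: "x \<in># M" for x
  proof (cases "x = m")
    case True
    have G: "GE x ?M' = filter_mset (\<lambda>y. m \<le> y) M" unfolding GE_def True by simp
    show ?thesis
    proof (cases "m \<in># GE m M")
      case True2: True
      have sz: "size (GE m M) < size M" using size_LT_GE[OF less.prems(1)] by simp
      have "RR (add_mset m (GE m M)) = RR (GE m M)"
        by (rule less.hyps[OF sz True2]) (use less.prems in \<open>auto simp: GE_def dest: in_diffD\<close>)
      moreover have "add_mset m (GE m M) = filter_mset (\<lambda>y. m \<le> y) M"
        unfolding GE_def using less.prems by (simp add: insert_DiffM)
      ultimately show ?thesis using G True by simp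
    next
      case False
      have all: "\<forall>y\<in>#GE m M. y = m"
      proof
        fix y assume "y \<in># GE m M"
        then have "y \<in># filter_mset (\<lambda>y. m \<le> y) M" unfolding GE_def by (rule in_diffD)
        then show "y = m" using less.prems by auto
      qed
      have e: "GE m M = {#}"
      proof (rule ccontr)
        assume "GE m M \<noteq> {#}"
        then obtain y where "y \<in># GE m M" by blast
        then show False using all False by auto
      qed
      have "filter_mset (\<lambda>y. m \<le> y) M = {#m#}"
      proof -
        have "m \<in># filter_mset (\<lambda>y. m \<le> y) M" using less.prems by simp
        then have "filter_mset (\<lambda>y. m \<le> y) M = add_mset m (GE m M)"
          unfolding GE_def by (simp add: insert_DiffM)
        then show ?thesis using e by simp
      qed
      then show ?thesis using G e True by (simp add: RR_single RR_empty)
    qed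
  next
    case False
    have xm: "x < m" using False less.prems x by force
    have G: "GE x ?M' = add_mset m (GE x M)" unfolding GE_def using xm by auto
    have sz: "size (GE x M) < size M" using size_LT_GE[OF x] by simp
    have mG: "m \<in># GE x M" unfolding GE_def using xm less.prems
      by (simp add: in_diff_count)
    show ?thesis unfolding G
      by (rule less.hyps[OF sz mG]) (use less.prems in \<open>auto simp: GE_def dest: in_diffD\<close>)
  qed
  have CLT: "Cn (LT x ?M') = Cn (LT x M)" if "x \<in># M" for x using LTx[OF that] by simp
  show ?case
    using RR_rec[of ?M'] RR_rec[OF ne] set_eq LTx GEx
    by (simp cong: sum.cong)
qed

lemma lemmaA_Cn:
  assumes "m \<in># M" "\<forall>y\<in>#M. y \<le> m"
  shows "Cn (add_mset m M) = Cn M"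
  using lemmaA[OF assms] Cn_RR by (metis of_nat_eq_iff)

definition base :: "nat list \<Rightarrow> nat list \<Rightarrow> nat \<Rightarrow> nat multiset" where
  "base al ls s = (\<Sum>j<s. replicate_mset (al ! j) (ls ! j))"

definition lett :: "nat list \<Rightarrow> nat \<Rightarrow> nat" where
  "lett ls s = (if s < length ls then ls ! s else sum_list ls + 1)"

definition Ms :: "nat list \<Rightarrow> nat list \<Rightarrow> nat \<Rightarrow> nat multiset" where
  "Ms al ls s = add_mset (lett ls s) (base al ls s)"

lemma base_Suc: "base al ls (Suc s) = base al ls s + replicate_mset (al ! s) (ls ! s)"
  unfolding base_def by simp

lemma size_base: "s \<le> length al \<Longrightarrow> size (base al ls s) = sum_list (take s al)"
proof (induction s)
  case 0 then show ?case by (simp add: base_def)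
next
  case (Suc s)
  then show ?case by (simp add: base_Suc take_Suc_conv_app_nth)
qed

lemma in_base: "y \<in># base al ls s \<Longrightarrow> \<exists>j<s. y = ls ! j"
proof (induction s)
  case 0 then show ?case by (simp add: base_def)
next
  case (Suc s)
  then show ?case by (auto simp: base_Suc in_replicate_mset split: if_splits dest: less_SucI)
qed

lemma base_lt:
  assumes "sorted_wrt (<) ls" "s \<le> length ls" "y \<in># base al ls s"
  shows "y < lett ls s"
proof -
  obtain j where j: "j < s" "y = ls ! j" using in_base[OF assms(3)] by blast
  show ?thesis
  proof (cases "s < length ls")
    case True
    then show ?thesis using j assms(1) by (simp add: lett_def sorted_wrt_nth_less)
  next
    case False
    have "ls ! j \<in> set ls" using j assms(2) by simp
    then have "ls ! j \<le> sum_list ls" by (rule member_le_sum_list) simp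
    then show ?thesis using j False by (simp add: lett_def)
  qed
qed

lemma RR_rep:
  assumes "\<forall>y\<in>#B. y < m"
  shows "RR (add_mset m B + replicate_mset j m) = RR (add_mset m B)"
proof (induction j)
  case 0 then show ?case by simp
next
  case (Suc j)
  have "RR (add_mset m (add_mset m B + replicate_mset j m)) = RR (add_mset m B + replicate_mset j m)"
    by (rule lemmaA) (use assms in \<open>auto simp: in_replicate_mset\<close>)
  then show ?case using Suc by simp
qed

lemma base_Suc_Ms:
  assumes "\<forall>x\<in>set al. x > 0" "s < length al" "s < length ls"
  shows "base al ls (Suc s) = add_mset (ls ! s) (base al ls s) + replicate_mset (al ! s - 1) (ls ! s)"
proof -
  have "al ! s > 0" using assms by auto
  then obtain a where "al ! s = Suc a" by (cases "al ! s") auto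
  then show ?thesis by (simp add: base_Suc)
qed

lemma RR_base_Suc:
  assumes "\<forall>x\<in>set al. x > 0" "s < length al" "length ls = length al" "sorted_wrt (<) ls"
  shows "RR (base al ls (Suc s)) = RR (Ms al ls s)"
proof -
  have "\<forall>y\<in>#base al ls s. y < ls ! s"
    using base_lt[OF assms(4), where s=s and al=al] assms by (simp add: lett_def)
  then show ?thesis using base_Suc_Ms[OF assms(1,2)] assms RR_rep by (simp add: Ms_def lett_def)
qed

lemma Cn_base_Suc:
  assumes "\<forall>x\<in>set al. x > 0" "s < length al" "length ls = length al" "sorted_wrt (<) ls"
  shows "Cn (base al ls (Suc s)) = Cn (Ms al ls s)"
  using RR_base_Suc[OF assms] Cn_RR by (metis of_nat_eq_iff)

lemma X_monom: "([:0,1:] :: int poly) = monom 1 1"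
  by (simp add: poly_eq_iff coeff_pCons split: nat.split)

lemma step:
  assumes "\<forall>x\<in>set al. x > 0" "s < length al" "length ls = length al" "sorted_wrt (<) ls"
  shows "RR (Ms al ls s) = monom 1 1 * RR (Ms al ls (Suc s))
           + of_nat (Cn (Ms al ls s)) * [:1,-1:] ^ (sum_list (take (Suc s) al) + 1)"
proof -
  have lt: "\<forall>y\<in>#base al ls (Suc s). y < lett ls (Suc s)"
    using base_lt[OF assms(4)] assms by simp
  have "[:0,1:] * RR (Ms al ls (Suc s)) = RR (base al ls (Suc s))
      - of_nat (Cn (base al ls (Suc s))) * [:1,-1:] ^ (size (base al ls (Suc s)) + 1)"
    unfolding Ms_def by (rule lemmaB[OF lt])
  then show ?thesis
    using RR_base_Suc[OF assms] Cn_base_Suc[OF assms] size_base[of "Suc s" al ls] assms(2)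
    by (simp add: X_monom)
qed

lemma Ms0: "RR (Ms al ls 0) = 1" "Cn (Ms al ls 0) = 1"
proof -
  show "RR (Ms al ls 0) = 1" by (simp add: Ms_def base_def RR_single)
  then show "Cn (Ms al ls 0) = 1" using Cn_RR by (metis of_nat_eq_1_iff poly_1)
qed

lemma chain:
  assumes "\<forall>x\<in>set al. x > 0" "length ls = length al" "sorted_wrt (<) ls" "t \<le> length al"
  shows "1 = (\<Sum>s<t. of_nat (Cn (Ms al ls s)) * monom 1 s * [:1,-1:] ^ (sum_list (take (Suc s) al) + 1))
             + monom 1 t * RR (Ms al ls t)"
  using assms(4)
proof (induction t)
  case 0 then show ?case by (simp add: Ms0)
next
  case (Suc t)
  have st: "RR (Ms al ls t) = monom 1 1 * RR (Ms al ls (Suc t))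
           + of_nat (Cn (Ms al ls t)) * [:1,-1:] ^ (sum_list (take (Suc t) al) + 1)"
    using step[OF assms(1) _ assms(2,3)] Suc.prems by simp
  have mm: "monom (1::int) t * monom 1 1 = monom 1 (Suc t)" by (simp add: mult_monom)
  have e: "monom 1 t * RR (Ms al ls t) = monom 1 (Suc t) * RR (Ms al ls (Suc t))
     + of_nat (Cn (Ms al ls t)) * monom 1 t * [:1,-1:] ^ (sum_list (take (Suc t) al) + 1)"
    unfolding st distrib_left mm[symmetric] by (simp only: mult.assoc mult.left_commute)
  have tl: "t \<le> length al" using Suc.prems by simp
  from Suc.IH[OF tl] have "1 = (\<Sum>s<t. of_nat (Cn (Ms al ls s)) * monom 1 s * [:1,-1:] ^ (sum_list (take (Suc s) al) + 1))
     + (monom 1 (Suc t) * RR (Ms al ls (Suc t))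
     + of_nat (Cn (Ms al ls t)) * monom 1 t * [:1,-1:] ^ (sum_list (take (Suc t) al) + 1))"
    by (simp only: e)
  then show ?case by (simp only: sum.lessThan_Suc ac_simps)
qed

lemma coeff_of_nat_mult: "coeff (of_nat c * p) n = of_nat c * coeff (p :: int poly) n"
  by (simp add: of_nat_poly)

lemma coeff_q_pow: "coeff ([:1,-1:] ^ N :: int poly) j = (-1) ^ j * int (N choose j)"
proof (cases "j \<le> N")
  case True
  then show ?thesis using coeff_linear_poly_power[OF True, of "1::int" "-1"] by simp
next
  case False
  have "degree ([:1,-1:] ^ N :: int poly) \<le> N"
    using degree_power_le[of "[:1,-1:] :: int poly" N] by simp
  then show ?thesis using False by (simp add: coeff_eq_0)
qed

lemma identB:
  assumes "\<forall>x\<in>set al. x > 0" "length ls = length al" "sorted_wrt (<) ls"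
    and r: "1 \<le> r" "Suc r \<le> length al"
  shows "(\<Sum>s<Suc r. (-1) ^ (r - s) * int ((r + sum_list (take (Suc s) al)) choose (r - s))
            * int (Cn (Ms al ls s))) = 0"
proof -
  let ?q = "[:1,-1:] :: int poly"
  define P where "P = (\<Sum>s<Suc r. of_nat (Cn (Ms al ls s)) * monom 1 s * ?q ^ (sum_list (take (Suc s) al) + 1))"
  have ch: "1 = P + monom 1 (Suc r) * RR (Ms al ls (Suc r))"
    unfolding P_def by (rule chain[OF assms(1-3) r(2)])
  then have "?q ^ (r - 1) = ?q ^ (r - 1) * P + monom 1 (Suc r) * (?q ^ (r - 1) * RR (Ms al ls (Suc r)))"
    by (metis (no_types, lifting) distrib_left mult.left_commute mult.right_neutral)
  then have "coeff (?q ^ (r - 1)) r = coeff (?q ^ (r - 1) * P) r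
     + coeff (monom 1 (Suc r) * (?q ^ (r - 1) * RR (Ms al ls (Suc r)))) r"
    by (metis coeff_add)
  then have "coeff (?q ^ (r - 1)) r = coeff (?q ^ (r - 1) * P) r"
    by (simp only: coeff_monom_mult) simp
  moreover have "coeff (?q ^ (r - 1)) r = 0"
    using coeff_q_pow[of "r - 1" r] r by simp
  moreover have "?q ^ (r - 1) * P = (\<Sum>s<Suc r. of_nat (Cn (Ms al ls s)) * (monom 1 s * ?q ^ (r + sum_list (take (Suc s) al))))"
    unfolding P_def sum_distrib_left
  proof (rule sum.cong)
    fix s assume "s \<in> {..<Suc r}"
    have "r - 1 + (sum_list (take (Suc s) al) + 1) = r + sum_list (take (Suc s) al)" using r by simp
    then have "?q ^ (r - 1) * ?q ^ (sum_list (take (Suc s) al) + 1) = ?q ^ (r + sum_list (take (Suc s) al))"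
      by (metis power_add)
    then show "?q ^ (r - 1) * (of_nat (Cn (Ms al ls s)) * monom 1 s * ?q ^ (sum_list (take (Suc s) al) + 1))
      = of_nat (Cn (Ms al ls s)) * (monom 1 s * ?q ^ (r + sum_list (take (Suc s) al)))"
      by (metis (no_types, lifting) mult.assoc mult.left_commute)
  qed simp
  ultimately have "0 = coeff (\<Sum>s<Suc r. of_nat (Cn (Ms al ls s)) * (monom 1 s * ?q ^ (r + sum_list (take (Suc s) al)))) r"
    by simp
  also have "\<dots> = (\<Sum>s<Suc r. int (Cn (Ms al ls s)) * ((-1) ^ (r - s) * int ((r + sum_list (take (Suc s) al)) choose (r - s))))"
    unfolding coeff_sum
    by (rule sum.cong) (auto simp: coeff_of_nat_mult coeff_monom_mult coeff_q_pow)
  finally show ?thesis by (simp add: algebra_simps)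
qed

lemma hess_minor:
  fixes f :: "nat \<times> nat \<Rightarrow> int"
  assumes sub: "\<forall>i. f (Suc i, i) = 1" and z: "\<forall>i j. Suc j < i \<longrightarrow> f (i, j) = 0" and im: "i \<le> m"
  shows "det (mat_delete (mat (Suc m) (Suc m) f) i m) = det (mat i i f)"
proof -
  define A2 where "A2 = mat i (m - i) (\<lambda>(r,c). f (r, c + i))"
  define U where "U = mat (m - i) (m - i) (\<lambda>(r,c). f (Suc (r + i), c + i))"
  have eq: "mat_delete (mat (Suc m) (Suc m) f) i m = four_block_mat (mat i i f) A2 (0\<^sub>m (m - i) i) U"
  proof (rule eq_matI)
    fix r c assume rc: "r < dim_row (four_block_mat (mat i i f) A2 (0\<^sub>m (m - i) i) U)"
      "c < dim_col (four_block_mat (mat i i f) A2 (0\<^sub>m (m - i) i) U)"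
    then have r: "r < m" and c: "c < m" using im by (auto simp: A2_def U_def)
    show "mat_delete (mat (Suc m) (Suc m) f) i m $$ (r, c) = four_block_mat (mat i i f) A2 (0\<^sub>m (m - i) i) U $$ (r, c)"
      using r c im z by (auto simp: mat_delete_def A2_def U_def)
  qed (use im in \<open>auto simp: A2_def U_def\<close>)
  have ut: "upper_triangular U" unfolding upper_triangular_def U_def using z by auto
  have dU: "det U = 1"
  proof -
    have "det U = prod_list (diag_mat U)"
      by (rule det_upper_triangular[OF ut, of "m - i"]) (simp add: U_def)
    also have "diag_mat U = map (\<lambda>_. 1) [0..<m - i]"
      unfolding diag_mat_def U_def using sub by simp
    finally show ?thesis by (simp add: map_replicate_const)
  qed
  have Uc: "U \<in> carrier_mat (m - i) (m - i)" by (simp add: U_def)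
  show ?thesis unfolding eq
    by (subst det_four_block_mat_lower_left_zero[of _ i _ "m - i"]) (auto simp: A2_def Uc dU)
qed

lemma hess:
  fixes f :: "nat \<times> nat \<Rightarrow> int"
  assumes sub: "\<forall>i. f (Suc i, i) = 1" and z: "\<forall>i j. Suc j < i \<longrightarrow> f (i, j) = 0"
  shows "det (mat (Suc m) (Suc m) f) = (\<Sum>i<Suc m. (-1) ^ (i + m) * f (i, m) * det (mat i i f))"
proof -
  have "det (mat (Suc m) (Suc m) f) = (\<Sum>i<Suc m. mat (Suc m) (Suc m) f $$ (i, m) * cofactor (mat (Suc m) (Suc m) f) i m)"
    by (rule laplace_expansion_column) auto
  also have "\<dots> = (\<Sum>i<Suc m. (-1) ^ (i + m) * f (i, m) * det (mat i i f))"
    by (rule sum.cong) (auto simp: cofactor_def hess_minor[OF sub z])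
  finally show ?thesis .
qed

definition fm :: "nat list \<Rightarrow> nat \<times> nat \<Rightarrow> int" where
  "fm al = (\<lambda>(i, j). binom_int (j + 1 + sum_list (take (i + 1) al)) (int j - int i + 1))"

lemma fm_sub: "\<forall>i. fm al (Suc i, i) = 1"
  by (simp add: fm_def binom_int_def)

lemma fm_z: "\<forall>i j. Suc j < i \<longrightarrow> fm al (i, j) = 0"
  by (simp add: fm_def binom_int_def)

lemma fm_val: "i \<le> m \<Longrightarrow> fm al (i, m) = int ((Suc m + sum_list (take (Suc i) al)) choose (Suc m - i))"
proof -
  assume "i \<le> m"
  then have "nat (int m - int i + 1) = Suc m - i" "\<not> (int m - int i + 1 < 0)" by auto
  then show ?thesis by (simp add: fm_def binom_int_def)
qed

lemma sign_eq: "s \<le> m \<Longrightarrow> (-1::int) ^ (s + m) = (-1) ^ (m - s)"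
proof -
  assume "s \<le> m"
  then have e: "s + m = (m - s) + 2 * s" by simp
  show ?thesis unfolding e power_add power_mult by simp
qed

lemma D_eq:
  assumes "\<forall>x\<in>set al. x > 0" "length ls = length al" "sorted_wrt (<) ls"
  shows "Suc t \<le> length al \<Longrightarrow> det (mat t t (fm al)) = int (Cn (Ms al ls t))"
proof (induction t rule: less_induct)
  case (less t)
  show ?case
  proof (cases t)
    case 0
    have "mat 0 0 (fm al) = 1\<^sub>m 0" by (rule eq_matI) auto
    then show ?thesis using 0 Ms0 by simp
  next
    case (Suc m)
    have "det (mat t t (fm al)) = (\<Sum>i<Suc m. (-1) ^ (i + m) * fm al (i, m) * det (mat i i (fm al)))"
      unfolding Suc by (rule hess[OF fm_sub fm_z])
    also have "\<dots> = (\<Sum>i<Suc m. (-1) ^ (m - i) * int ((Suc m + sum_list (take (Suc i) al)) choose (Suc m - i))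
                        * int (Cn (Ms al ls i)))"
    proof (rule sum.cong)
      fix i assume i: "i \<in> {..<Suc m}"
      then have "det (mat i i (fm al)) = int (Cn (Ms al ls i))"
        using less.IH[of i] less.prems Suc by simp
      then show "(-1) ^ (i + m) * fm al (i, m) * det (mat i i (fm al))
        = (-1) ^ (m - i) * int ((Suc m + sum_list (take (Suc i) al)) choose (Suc m - i)) * int (Cn (Ms al ls i))"
        using i by (simp add: fm_val sign_eq)
    qed simp
    also have "\<dots> = int (Cn (Ms al ls t))"
    proof -
      have B: "(\<Sum>s<Suc (Suc m). (-1) ^ (Suc m - s) * int ((Suc m + sum_list (take (Suc s) al)) choose (Suc m - s))
            * int (Cn (Ms al ls s))) = 0"
        by (rule identB[OF assms]) (use less.prems Suc in auto)
      define g where "g = (\<lambda>s. (-1::int) ^ (Suc m - s) * int ((Suc m + sum_list (take (Suc s) al)) choose (Suc m - s))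
            * int (Cn (Ms al ls s)))"
      define h where "h = (\<lambda>s. (-1::int) ^ (m - s) * int ((Suc m + sum_list (take (Suc s) al)) choose (Suc m - s))
            * int (Cn (Ms al ls s)))"
      have gh: "g s = - h s" if "s < Suc m" for s
      proof -
        have "(-1::int) ^ (Suc m - s) = - ((-1) ^ (m - s))"
          using that by (simp add: Suc_diff_le)
        then show ?thesis unfolding g_def h_def by simp
      qed
      have "(\<Sum>s<Suc (Suc m). g s) = (\<Sum>s<Suc m. g s) + g (Suc m)" by (rule sum.lessThan_Suc)
      also have "(\<Sum>s<Suc m. g s) = (\<Sum>s<Suc m. - h s)" by (rule sum.cong) (auto simp: gh)
      also have "\<dots> = - (\<Sum>s<Suc m. h s)" by (rule sum_negf)
      also have "g (Suc m) = int (Cn (Ms al ls (Suc m)))" unfolding g_def by simp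
      finally have "(\<Sum>s<Suc (Suc m). g s) = - (\<Sum>s<Suc m. h s) + int (Cn (Ms al ls (Suc m)))" .
      then have "(\<Sum>s<Suc m. h s) = int (Cn (Ms al ls (Suc m)))" using B unfolding g_def by simp
      then show ?thesis using Suc unfolding h_def by simp
    qed
    finally show ?thesis .
  qed
qed

theorem corollary4p12:
  fixes al ls :: "nat list" and n k :: nat
  assumes "length al = k" and "k \<ge> 1"
    and "\<forall>x \<in> set al. x > 0" and "sum_list al = n"
    and "length ls = k" and "sorted_wrt (<) ls" and "\<forall>x \<in> set ls. x > 0"
  shows "int (card ((\<lambda>w. {w'. sylv_equiv w w'}) ` words_with_content al ls)) =
    det (mat (k - 1) (k - 1)
      (\<lambda>(i, j). binom_int (j + 1 + sum_list (take (i + 1) al)) (int j - int i + 1)))"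
proof -
  have W: "words_with_content al ls = {w. mset w = base al ls k}"
    unfolding words_with_content_def base_def using assms(1) by simp
  have "card ((\<lambda>w. {w'. sylv_equiv w w'}) ` words_with_content al ls) = Cn (base al ls k)"
    unfolding classes_card W Cn_def SM_def ..
  also have "base al ls k = base al ls (Suc (k - 1))" using assms(2) by simp
  also have "Cn (base al ls (Suc (k - 1))) = Cn (Ms al ls (k - 1))"
    by (rule Cn_base_Suc) (use assms in auto)
  finally have "int (card ((\<lambda>w. {w'. sylv_equiv w w'}) ` words_with_content al ls)) = int (Cn (Ms al ls (k - 1)))"
    by simp
  also have "\<dots> = det (mat (k - 1) (k - 1) (fm al))"
    by (rule D_eq[symmetric]) (use assms in auto)
  finally show ?thesis unfolding fm_def .
qed

end
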